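(* Let $d\ge1$ and $1\le e\le d$ be integers, let $I\subset\mathbb{Z}^e$ be a finite index set, and let $\Lambda: I-I:=\{i-j:\ i,j\in I\}\to[0,1]$ be a neighborhood function with $\Lambda(k)=\Lambda(-k)$ and $\Lambda(0)=1$. Let $\delta>0$ and $$D^\delta_I:=\left\{x=(x_i)_{i\in I}\in\left([0,1]^d\right)^I:\ \Vert x_i-x_j\Vert\ge\delta \text{ whenever } i\neq j\right\}$$ (assumed nonempty), with $\Vert\cdot\Vert$ the Euclidean norm. For $x\in([0,1]^d)^I$ let $(C_i(x))_{i\in I}$ be the Voronoi partition of $[0,1]^d$: $C_i(x)$ consists of the $\omega\in[0,1]^d$ with $\Vert x_i-\omega\Vert<\Vert x_k-\omega\Vert$ for all $k\neq i$, ties being assigned to a single cell according to the lexicographical order on $I$. Let $\omega_1,\omega_2,\dots$ be i.i.d. random vectors in $[0,1]^d$ with law $P$, where $P$ has a density with respect to Lebesgue measure bounded by a constant $B>0$. Define the theoretical distortion $$V(x)=\frac12\sum_{i,j\in I}\Lambda(i-j)\int_{C_i(x)}\Vert x_j-\omega\Vert^2\,dP(\omega)$$ and the empirical distortion $$V_n(x)=\frac{1}{2n}\sum_{i\in I}\ \sum_{1\le m\le n:\ \omega_m\in C_i(x)}\ \sum_{j\in I}\Lambda(i-j)\Vert x_j-\omega_m\Vert^2 .$$ Let $\beta:\mathbb{N}^*\to(0,\infty)$ satisfy $\beta(n)\to\infty$, and let $$\bar\chi^\beta_n:=\left\{x\in D^\delta_I:\ V_n(x)<\inf_{z\in D^\delta_I}V_n(z)+\frac{1}{\beta(n)}\right\},\qquad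 \bar\chi:=\arg\min_{x\in D^\delta_I}V(x).$$ Then for every neighborhood $\mathcal N$ of $\bar\chi$ (in $D^\delta_I$), almost surely $\bar\chi^\beta_n\subset\mathcal N$ for all sufficiently large $n$; that is, the maps that almost minimize the empirical distortion converge almost surely to the set of minimizers of the theoretical distortion (strong consistency).
   Context: $\bar\chi^\beta_n$ is the (random) set of maps almost minimizing the empirical distortion; $\bar\chi$ is the set of maps minimizing the theoretical distortion over $D^\delta_I$. *)

theory Defs
  imports "HOL-Probability.Probability" "HOL-Library.List_Lexorder"
begin

text \<open>Indices in Z^e are represented as integer lists of length e; the
lexicographic order on lists (List_Lexorder) is used for tie-breaking.\<close>

definition idx_diff :: "int list \<Rightarrow> int list \<Rightarrow> int list" where
  "idx_diff i j = map2 (-) i j"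

definition idx_neg :: "int list \<Rightarrow> int list" where
  "idx_neg k = map uminus k"

definition diff_set :: "int list set \<Rightarrow> int list set" where
  "diff_set I = {idx_diff i j | i j. i \<in> I \<and> j \<in> I}"

definition unit_cube :: "(real ^ 'd) set" where
  "unit_cube = cbox 0 One"

text \<open>Configurations x = (x_i)_{i in I}, as functions that are 0 outside I.\<close>
definition D_delta :: "int list set \<Rightarrow> real \<Rightarrow> (int list \<Rightarrow> real ^ 'd) set" where
  "D_delta I \<delta> = {x. (\<forall>i\<in>I. x i \<in> unit_cube) \<and> (\<forall>i. i \<notin> I \<longrightarrow> x i = 0)
       \<and> (\<forall>i\<in>I. \<forall>j\<in>I. i \<noteq> j \<longrightarrow> dist (x i) (x j) \<ge> \<delta>)}"

definition voronoi_cell :: "int list set \<Rightarrow> (int list \<Rightarrow> real ^ 'd) \<Rightarrow> int list \<Rightarrow> (real ^ 'd) set" where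
  "voronoi_cell I x i = {\<omega> \<in> unit_cube. \<forall>k\<in>I. k \<noteq> i \<longrightarrow>
      (norm (x i - \<omega>) < norm (x k - \<omega>) \<or> (norm (x i - \<omega>) = norm (x k - \<omega>) \<and> i < k))}"

definition distortion ::
  "int list set \<Rightarrow> (int list \<Rightarrow> real) \<Rightarrow> (real ^ 'd) measure \<Rightarrow> (int list \<Rightarrow> real ^ 'd) \<Rightarrow> real" where
  "distortion I \<Lambda> P x = (1/2) * (\<Sum>i\<in>I. \<Sum>j\<in>I. \<Lambda> (idx_diff i j) *
      (LINT \<omega>:voronoi_cell I x i|P. (norm (x j - \<omega>))\<^sup>2))"

definition emp_distortion ::
  "int list set \<Rightarrow> (int list \<Rightarrow> real) \<Rightarrow> (nat \<Rightarrow> real ^ 'd) \<Rightarrow> nat \<Rightarrow> (int list \<Rightarrow> real ^ 'd) \<Rightarrow> real" where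
  "emp_distortion I \<Lambda> w n x = (1 / (2 * real n)) * (\<Sum>i\<in>I.
      \<Sum>m\<in>{m\<in>{1..n}. w m \<in> voronoi_cell I x i}. \<Sum>j\<in>I. \<Lambda> (idx_diff i j) * (norm (x j - w m))\<^sup>2)"

definition almost_min_set ::
  "int list set \<Rightarrow> real \<Rightarrow> (int list \<Rightarrow> real) \<Rightarrow> (nat \<Rightarrow> real ^ 'd) \<Rightarrow> (nat \<Rightarrow> real) \<Rightarrow> nat
     \<Rightarrow> (int list \<Rightarrow> real ^ 'd) set" where
  "almost_min_set I \<delta> \<Lambda> w \<beta> n = {x \<in> D_delta I \<delta>.
      emp_distortion I \<Lambda> w n x < (INF z\<in>D_delta I \<delta>. emp_distortion I \<Lambda> w n z) + 1 / \<beta> n}"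

definition argmin_set ::
  "int list set \<Rightarrow> real \<Rightarrow> (int list \<Rightarrow> real) \<Rightarrow> (real ^ 'd) measure \<Rightarrow> (int list \<Rightarrow> real ^ 'd) set" where
  "argmin_set I \<delta> \<Lambda> P = {x \<in> D_delta I \<delta>. \<forall>z\<in>D_delta I \<delta>. distortion I \<Lambda> P x \<le> distortion I \<Lambda> P z}"

end

theory Submission
  imports Defs
begin



locale iid_setting = prob_space M for M :: "'s measure" +
  fixes \<omega> :: "nat \<Rightarrow> 's \<Rightarrow> 'b::topological_space" and P :: "'b measure"
  assumes indep: "indep_vars (\<lambda>_. borel) \<omega> UNIV"
    and law: "\<And>m. distr M borel (\<omega> m) = P"
begin

lemma meas_\<omega>[measurable]: "\<omega> m \<in> borel_measurable M"
  using indep unfolding indep_vars_def by auto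

lemma hoeff_bound:
  fixes h :: "'b \<Rightarrow> real" and c \<epsilon> :: real
  assumes h[measurable]: "h \<in> borel_measurable borel" and hb: "\<And>y. \<bar>h y\<bar> \<le> c"
    and eps: "\<epsilon> > 0"
  shows "prob {s\<in>space M. \<bar>(\<Sum>m\<in>{1..n}. h (\<omega> m s)) / n - integral\<^sup>L P h\<bar> \<ge> \<epsilon>}
           \<le> 2 * exp (- 2 * \<epsilon>\<^sup>2 / (2*c+2)\<^sup>2) ^ n"
proof (cases "n = 0")
  case True
  then show ?thesis by (simp add: order_trans[OF prob_le_1])
next
  case False
  interpret H: Hoeffding_ineq_iid M "{1..n}" "\<lambda>m s. h (\<omega> m s)" "\<lambda>s. h (\<omega> 1 s)" "-c-1" "c+1"
    "expectation (\<lambda>s. h (\<omega> 1 s))"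
  proof unfold_locales
    show "indep_vars (\<lambda>_. borel) (\<lambda>m s. h (\<omega> m s)) {1..n}"
      by (rule indep_vars_compose2[where X=\<omega>, OF indep_vars_subset[OF indep]]) auto
    show "distr M borel (\<lambda>s. h (\<omega> i s)) = distr M borel (\<lambda>s. h (\<omega> 1 s))" for i
    proof -
      have "distr M borel (\<lambda>s. h (\<omega> i s)) = distr (distr M borel (\<omega> i)) borel h"
        by (subst distr_distr) (auto simp: comp_def)
      also have "\<dots> = distr (distr M borel (\<omega> 1)) borel h" by (simp add: law)
      also have "\<dots> = distr M borel (\<lambda>s. h (\<omega> 1 s))"
        by (subst distr_distr) (auto simp: comp_def)
      finally show ?thesis .
    qed
    show "AE x in M. h (\<omega> 1 x) \<in> {- c - 1..c + 1}"
      using hb by (intro AE_I2) (simp add: abs_le_iff, smt (verit) hb)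
  qed auto
  have mu: "expectation (\<lambda>s. h (\<omega> 1 s)) = integral\<^sup>L P h"
  proof -
    have "integral\<^sup>L P h = integral\<^sup>L (distr M borel (\<omega> 1)) h" by (simp add: law)
    also have "\<dots> = expectation (\<lambda>s. h (\<omega> 1 s))" by (rule integral_distr) auto
    finally show ?thesis by simp
  qed
  have c: "-c-1 < c+1" using hb[of undefined] by linarith
  have "prob {s\<in>space M. \<bar>(\<Sum>m\<in>{1..n}. h (\<omega> m s)) / n - integral\<^sup>L P h\<bar> \<ge> \<epsilon>}
     \<le> 2 * exp (-2 * n * \<epsilon>\<^sup>2 / (c+1 - (-c-1))\<^sup>2)"
    using H.Hoeffding_ineq_abs_ge'[OF _ c, of \<epsilon>] eps False unfolding mu by simp
  also have "exp (-2 * n * \<epsilon>\<^sup>2 / (c+1 - (-c-1))\<^sup>2) = exp (- 2 * \<epsilon>\<^sup>2 / (2*c+2)\<^sup>2) ^ n"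
    unfolding exp_of_nat_mult[symmetric] by (rule arg_cong[where f=exp]) (simp add: field_simps power2_eq_square)
  finally show ?thesis .
qed

lemma slln_eps:
  fixes h :: "'b \<Rightarrow> real" and c \<epsilon> :: real
  assumes h[measurable]: "h \<in> borel_measurable borel" and hb: "\<And>y. \<bar>h y\<bar> \<le> c"
    and eps: "\<epsilon> > 0"
  shows "AE s in M. eventually (\<lambda>n. \<bar>(\<Sum>m\<in>{1..n}. h (\<omega> m s)) / n - integral\<^sup>L P h\<bar> < \<epsilon>) sequentially"
proof -
  define E where "E n = {s\<in>space M. \<bar>(\<Sum>m\<in>{1..n}. h (\<omega> m s)) / n - integral\<^sup>L P h\<bar> \<ge> \<epsilon>}" for n
  define q where "q = exp (- 2 * \<epsilon>\<^sup>2 / (2*c+2)\<^sup>2)"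
  have c: "2*c+2 > 0" using hb[of undefined] by linarith
  have q: "norm q < 1" using eps c by (simp add: q_def)
  have Em[measurable]: "E n \<in> sets M" for n unfolding E_def by measurable
  have "summable (\<lambda>n. measure M (E n))"
  proof (rule summable_comparison_test)
    show "\<exists>N. \<forall>n\<ge>N. norm (measure M (E n)) \<le> 2 * q ^ n"
      using hoeff_bound[OF h hb eps] by (auto simp: E_def q_def)
    show "summable (\<lambda>n. 2 * q ^ n)" using summable_geometric[OF q] by (rule summable_mult)
  qed
  then have "AE s in M. eventually (\<lambda>n. s \<in> space M - E n) sequentially"
    by (intro borel_cantelli_AE1) (auto simp: emeasure_eq_measure)
  then show ?thesis
    by (rule eventually_mono) (auto elim!: eventually_mono simp: E_def not_le)
qed

lemma slln:
  fixes h :: "'b \<Rightarrow> real" and c :: real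
  assumes h[measurable]: "h \<in> borel_measurable borel" and hb: "\<And>y. \<bar>h y\<bar> \<le> c"
  shows "AE s in M. (\<lambda>n. (\<Sum>m\<in>{1..n}. h (\<omega> m s)) / n) \<longlonglongrightarrow> integral\<^sup>L P h"
proof -
  have "AE s in M. \<forall>k::nat. eventually (\<lambda>n. \<bar>(\<Sum>m\<in>{1..n}. h (\<omega> m s)) / n - integral\<^sup>L P h\<bar> < 1 / Suc k) sequentially"
    unfolding AE_all_countable by (intro allI slln_eps[OF h hb]) auto
  then show ?thesis
  proof (rule eventually_mono)
    fix s assume H: "\<forall>k::nat. eventually (\<lambda>n. \<bar>(\<Sum>m\<in>{1..n}. h (\<omega> m s)) / n - integral\<^sup>L P h\<bar> < 1 / Suc k) sequentially"
    show "(\<lambda>n. (\<Sum>m\<in>{1..n}. h (\<omega> m s)) / n) \<longlonglongrightarrow> integral\<^sup>L P h"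
    proof (rule tendstoI)
      fix e :: real assume "e > 0"
      then obtain k where k: "1 / Suc k < e" using nat_approx_posE by blast
      show "eventually (\<lambda>n. dist ((\<Sum>m\<in>{1..n}. h (\<omega> m s)) / n) (integral\<^sup>L P h) < e) sequentially"
        using H[rule_format, of k] by (rule eventually_mono) (use k in \<open>auto simp: dist_real_def\<close>)
    qed
  qed
qed

end



lemma cube_norm: "u \<in> unit_cube \<Longrightarrow> norm (u::real^'d) \<le> norm (One::real^'d)"
  unfolding unit_cube_def
  by (rule norm_le_componentwise_cart) (auto simp: mem_box_cart Cart_1[symmetric])

definition Rb :: "'d::finite itself \<Rightarrow> real" where "Rb _ = 2 * norm (One::real^'d)"

lemma cube_dist: "u \<in> unit_cube \<Longrightarrow> v \<in> unit_cube \<Longrightarrow> norm ((u::real^'d) - v) \<le> Rb TYPE('d)"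
  unfolding Rb_def using norm_triangle_ineq4[of u v] cube_norm[of u] cube_norm[of v] by linarith

lemma Rb_nonneg: "Rb TYPE('d::finite) \<ge> 0" unfolding Rb_def by simp

lemma sum_at_most_one:
  fixes a :: "'i \<Rightarrow> real"
  assumes "finite I" "\<And>i. i \<in> I \<Longrightarrow> \<bar>a i\<bar> \<le> b" "0 \<le> b"
    and "\<And>i k. i \<in> I \<Longrightarrow> k \<in> I \<Longrightarrow> a i \<noteq> 0 \<Longrightarrow> a k \<noteq> 0 \<Longrightarrow> i = k"
  shows "\<bar>sum a I\<bar> \<le> b"
proof (cases "\<exists>i\<in>I. a i \<noteq> 0")
  case False
  then show ?thesis using assms by simp
next
  case True
  then obtain i where i: "i \<in> I" "a i \<noteq> 0" by blast
  have "sum a I = a i + sum a (I - {i})" using assms(1) i by (simp add: sum.remove)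
  also have "sum a (I - {i}) = 0" using assms(4) i by (intro sum.neutral) blast
  finally show ?thesis using assms(2) i by simp
qed

lemma cell_unique:
  assumes "i \<in> I" "k \<in> I" "\<omega> \<in> voronoi_cell I x i" "\<omega> \<in> voronoi_cell I x k"
  shows "i = k"
proof (rule ccontr)
  assume "i \<noteq> k"
  then have "norm (x i - \<omega>) < norm (x k - \<omega>) \<or> (norm (x i - \<omega>) = norm (x k - \<omega>) \<and> i < k)"
    "norm (x k - \<omega>) < norm (x i - \<omega>) \<or> (norm (x k - \<omega>) = norm (x i - \<omega>) \<and> k < i)"
    using assms unfolding voronoi_cell_def by auto
  then show False by auto
qed

lemma cell_cube: "\<omega> \<in> voronoi_cell I x i \<Longrightarrow> \<omega> \<in> unit_cube"
  unfolding voronoi_cell_def by auto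

definition gfun :: "int list set \<Rightarrow> (int list \<Rightarrow> real) \<Rightarrow> (int list \<Rightarrow> real ^ 'd) \<Rightarrow> real ^ 'd \<Rightarrow> real" where
  "gfun I \<Lambda> x \<omega> = (\<Sum>i\<in>I. indicator (voronoi_cell I x i) \<omega> *
      (\<Sum>j\<in>I. \<Lambda> (idx_diff i j) * (norm (x j - \<omega>))\<^sup>2))"

definition Aset :: "int list set \<Rightarrow> (int list \<Rightarrow> real ^ 'd) \<Rightarrow> real \<Rightarrow> (real ^ 'd) set" where
  "Aset I x0 r = {\<omega> \<in> unit_cube. \<exists>i\<in>I. \<exists>k\<in>I. i \<noteq> k \<and> \<bar>norm (x0 i - \<omega>) - norm (x0 k - \<omega>)\<bar> \<le> 2 * r}"

lemma voronoi_cell_borel[measurable]: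
  assumes "finite I"
  shows "voronoi_cell I x i \<in> sets borel"
proof -
  have "voronoi_cell I x i = unit_cube \<inter> {\<omega>. \<forall>k\<in>I. k \<noteq> i \<longrightarrow>
      (norm (x i - \<omega>) < norm (x k - \<omega>) \<or> (norm (x i - \<omega>) = norm (x k - \<omega>) \<and> i < k))}"
    unfolding voronoi_cell_def by auto
  also have "\<dots> \<in> sets borel"
    unfolding unit_cube_def using assms by measurable
  finally show ?thesis .
qed

lemma Aset_borel[measurable]:
  assumes "finite I"
  shows "Aset I x0 r \<in> sets borel"
proof -
  have "Aset I x0 r = unit_cube \<inter> {\<omega>. \<exists>i\<in>I. \<exists>k\<in>I. i \<noteq> k \<and> \<bar>norm (x0 i - \<omega>) - norm (x0 k - \<omega>)\<bar> \<le> 2 * r}"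
    unfolding Aset_def by auto
  also have "\<dots> \<in> sets borel"
    unfolding unit_cube_def using assms by measurable
  finally show ?thesis .
qed

lemma gfun_borel[measurable]:
  assumes "finite I"
  shows "gfun I \<Lambda> x \<in> borel_measurable borel"
  unfolding gfun_def using assms by measurable

lemma D_cube: "x \<in> D_delta I \<delta> \<Longrightarrow> i \<in> I \<Longrightarrow> x i \<in> unit_cube"
  unfolding D_delta_def by auto

lemma gfun_bound:
  fixes x :: "int list \<Rightarrow> real^'d"
  assumes finI: "finite I" and Lam: "\<forall>i\<in>I. \<forall>j\<in>I. 0 \<le> \<Lambda> (idx_diff i j) \<and> \<Lambda> (idx_diff i j) \<le> 1"
    and x: "x \<in> D_delta I \<delta>"
  shows "\<bar>gfun I \<Lambda> x \<omega>\<bar> \<le> card I * (Rb TYPE('d))\<^sup>2"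
  unfolding gfun_def
proof (rule sum_at_most_one[OF finI])
  fix i assume i: "i \<in> I"
  show "\<bar>indicator (voronoi_cell I x i) \<omega> * (\<Sum>j\<in>I. \<Lambda> (idx_diff i j) * (norm (x j - \<omega>))\<^sup>2)\<bar>
        \<le> card I * (Rb TYPE('d))\<^sup>2"
  proof (cases "\<omega> \<in> voronoi_cell I x i")
    case True
    then have w: "\<omega> \<in> unit_cube" by (rule cell_cube)
    have "(\<Sum>j\<in>I. \<Lambda> (idx_diff i j) * (norm (x j - \<omega>))\<^sup>2) \<le> (\<Sum>j\<in>I. (Rb TYPE('d))\<^sup>2)"
    proof (rule sum_mono)
      fix j assume j: "j \<in> I"
      have "norm (x j - \<omega>) \<le> Rb TYPE('d)" using cube_dist[OF D_cube[OF x j] w] .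
      then have "(norm (x j - \<omega>))\<^sup>2 \<le> (Rb TYPE('d))\<^sup>2" by (simp add: power_mono)
      then show "\<Lambda> (idx_diff i j) * (norm (x j - \<omega>))\<^sup>2 \<le> (Rb TYPE('d))\<^sup>2"
      proof -
        have "\<Lambda> (idx_diff i j) * (norm (x j - \<omega>))\<^sup>2 \<le> 1 * (norm (x j - \<omega>))\<^sup>2"
          using Lam i j by (intro mult_right_mono) auto
        then show ?thesis using \<open>(norm (x j - \<omega>))\<^sup>2 \<le> (Rb TYPE('d))\<^sup>2\<close> by simp
      qed
    qed
    moreover have "0 \<le> (\<Sum>j\<in>I. \<Lambda> (idx_diff i j) * (norm (x j - \<omega>))\<^sup>2)"
      using Lam i by (intro sum_nonneg) auto
    ultimately show ?thesis using True by simp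
  qed (simp add: Rb_nonneg)
next
  show "0 \<le> card I * (Rb TYPE('d))\<^sup>2" by simp
next
  fix i k assume "i \<in> I" "k \<in> I"
    "indicator (voronoi_cell I x i) \<omega> * (\<Sum>j\<in>I. \<Lambda> (idx_diff i j) * (norm (x j - \<omega>))\<^sup>2) \<noteq> 0"
    "indicator (voronoi_cell I x k) \<omega> * (\<Sum>j\<in>I. \<Lambda> (idx_diff k j) * (norm (x j - \<omega>))\<^sup>2) \<noteq> 0"
  then show "i = k" by (intro cell_unique[of i I k \<omega> x]) (auto simp: indicator_def split: if_splits)
qed

lemma cell_stable:
  fixes x x0 :: "int list \<Rightarrow> real^'d"
  assumes close: "\<forall>i\<in>I. dist (x i) (x0 i) < r" and nA: "\<omega> \<notin> Aset I x0 r" and i: "i \<in> I"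
  shows "\<omega> \<in> voronoi_cell I x i \<longleftrightarrow> \<omega> \<in> voronoi_cell I x0 i"
proof (cases "\<omega> \<in> unit_cube")
  case False
  then show ?thesis using cell_cube by blast
next
  case True
  have key: "(norm (x i - \<omega>) < norm (x k - \<omega>) \<longleftrightarrow> norm (x0 i - \<omega>) < norm (x0 k - \<omega>))
     \<and> norm (x i - \<omega>) \<noteq> norm (x k - \<omega>) \<and> norm (x0 i - \<omega>) \<noteq> norm (x0 k - \<omega>)"
    if k: "k \<in> I" "k \<noteq> i" for k
  proof -
    have a: "\<bar>norm (x0 i - \<omega>) - norm (x0 k - \<omega>)\<bar> > 2 * r"
      using nA True i k unfolding Aset_def by force
    have b: "\<bar>norm (x i - \<omega>) - norm (x0 i - \<omega>)\<bar> < r"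
      using norm_triangle_ineq3[of "x i - \<omega>" "x0 i - \<omega>"] close[rule_format, OF i] by (simp add: dist_norm)
    have c: "\<bar>norm (x k - \<omega>) - norm (x0 k - \<omega>)\<bar> < r"
      using norm_triangle_ineq3[of "x k - \<omega>" "x0 k - \<omega>"] close[rule_format, OF k(1)] by (simp add: dist_norm)
    show ?thesis using a b c by linarith
  qed
  show ?thesis unfolding voronoi_cell_def using key True by auto
qed

lemma gfun_close:
  fixes x x0 :: "int list \<Rightarrow> real^'d"
  assumes finI: "finite I" and Lam: "\<forall>i\<in>I. \<forall>j\<in>I. 0 \<le> \<Lambda> (idx_diff i j) \<and> \<Lambda> (idx_diff i j) \<le> 1"
    and x: "x \<in> D_delta I \<delta>" and x0: "x0 \<in> D_delta I \<delta>" and r: "r > 0"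
    and close: "\<forall>i\<in>I. dist (x i) (x0 i) < r"
  shows "\<bar>gfun I \<Lambda> x \<omega> - gfun I \<Lambda> x0 \<omega>\<bar> \<le> card I * (2 * Rb TYPE('d) * r)
           + 2 * (card I * (Rb TYPE('d))\<^sup>2) * indicator (Aset I x0 r) \<omega>"
proof (cases "\<omega> \<in> Aset I x0 r")
  case True
  have "\<bar>gfun I \<Lambda> x \<omega> - gfun I \<Lambda> x0 \<omega>\<bar> \<le> 2 * (card I * (Rb TYPE('d))\<^sup>2)"
    using gfun_bound[OF finI Lam x, of \<omega>] gfun_bound[OF finI Lam x0, of \<omega>] by linarith
  moreover have "0 \<le> card I * (2 * Rb TYPE('d) * r)" using r Rb_nonneg[where 'd='d] by simp
  moreover have "indicator (Aset I x0 r) \<omega> = (1::real)" using True by simp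
  ultimately show ?thesis by (simp only: mult_1_right)
next
  case False
  have eq: "gfun I \<Lambda> x \<omega> - gfun I \<Lambda> x0 \<omega> = (\<Sum>i\<in>I. indicator (voronoi_cell I x0 i) \<omega> *
      ((\<Sum>j\<in>I. \<Lambda> (idx_diff i j) * (norm (x j - \<omega>))\<^sup>2) - (\<Sum>j\<in>I. \<Lambda> (idx_diff i j) * (norm (x0 j - \<omega>))\<^sup>2)))"
    unfolding gfun_def sum_subtractf[symmetric]
    by (intro sum.cong refl) (simp add: cell_stable[OF close False] right_diff_distrib sum_subtractf indicator_def)
  have "\<bar>gfun I \<Lambda> x \<omega> - gfun I \<Lambda> x0 \<omega>\<bar> \<le> card I * (2 * Rb TYPE('d) * r)"
    unfolding eq
  proof (rule sum_at_most_one[OF finI])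
    fix i assume i: "i \<in> I"
    show "\<bar>indicator (voronoi_cell I x0 i) \<omega> *
      ((\<Sum>j\<in>I. \<Lambda> (idx_diff i j) * (norm (x j - \<omega>))\<^sup>2) - (\<Sum>j\<in>I. \<Lambda> (idx_diff i j) * (norm (x0 j - \<omega>))\<^sup>2))\<bar>
        \<le> card I * (2 * Rb TYPE('d) * r)"
    proof (cases "\<omega> \<in> voronoi_cell I x0 i")
      case True
      then have w: "\<omega> \<in> unit_cube" by (rule cell_cube)
      have "\<bar>(\<Sum>j\<in>I. \<Lambda> (idx_diff i j) * (norm (x j - \<omega>))\<^sup>2) - (\<Sum>j\<in>I. \<Lambda> (idx_diff i j) * (norm (x0 j - \<omega>))\<^sup>2)\<bar>
          = \<bar>\<Sum>j\<in>I. \<Lambda> (idx_diff i j) * ((norm (x j - \<omega>))\<^sup>2 - (norm (x0 j - \<omega>))\<^sup>2)\<bar>"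
        by (simp add: sum_subtractf[symmetric] algebra_simps)
      also have "\<dots> \<le> (\<Sum>j\<in>I. \<bar>\<Lambda> (idx_diff i j) * ((norm (x j - \<omega>))\<^sup>2 - (norm (x0 j - \<omega>))\<^sup>2)\<bar>)"
        by (rule sum_abs)
      also have "\<dots> \<le> (\<Sum>j\<in>I. 2 * Rb TYPE('d) * r)"
      proof (rule sum_mono)
        fix j assume j: "j \<in> I"
        define a where "a = norm (x j - \<omega>)"
        define b where "b = norm (x0 j - \<omega>)"
        have a: "0 \<le> a" "a \<le> Rb TYPE('d)" using cube_dist[OF D_cube[OF x j] w] by (auto simp: a_def)
        have b: "0 \<le> b" "b \<le> Rb TYPE('d)" using cube_dist[OF D_cube[OF x0 j] w] by (auto simp: b_def)
        have ab: "\<bar>a - b\<bar> \<le> r"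
          using norm_triangle_ineq3[of "x j - \<omega>" "x0 j - \<omega>"] close[rule_format, OF j] by (simp add: dist_norm a_def b_def)
        have "a\<^sup>2 - b\<^sup>2 = (a - b) * (a + b)" by (simp add: power2_eq_square algebra_simps)
        then have "\<bar>a\<^sup>2 - b\<^sup>2\<bar> = \<bar>a - b\<bar> * (a + b)" using a b by (simp add: abs_mult)
        also have "\<dots> \<le> r * (2 * Rb TYPE('d))" using a b ab by (intro mult_mono) auto
        finally have "\<bar>a\<^sup>2 - b\<^sup>2\<bar> \<le> 2 * Rb TYPE('d) * r" by (simp add: mult_ac)
        moreover have "\<bar>\<Lambda> (idx_diff i j)\<bar> \<le> 1" using Lam i j by auto
        ultimately have "\<bar>\<Lambda> (idx_diff i j)\<bar> * \<bar>a\<^sup>2 - b\<^sup>2\<bar> \<le> 1 * (2 * Rb TYPE('d) * r)"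
          by (intro mult_mono) auto
        then show "\<bar>\<Lambda> (idx_diff i j) * ((norm (x j - \<omega>))\<^sup>2 - (norm (x0 j - \<omega>))\<^sup>2)\<bar> \<le> 2 * Rb TYPE('d) * r"
          by (simp add: a_def b_def abs_mult)
      qed
      finally show ?thesis using True by simp
    qed (use r Rb_nonneg[where 'd='d] in simp)
  next
    show "0 \<le> card I * (2 * Rb TYPE('d) * r)" using r Rb_nonneg[where 'd='d] by simp
  next
    fix i k assume "i \<in> I" "k \<in> I"
      "indicator (voronoi_cell I x0 i) \<omega> * ((\<Sum>j\<in>I. \<Lambda> (idx_diff i j) * (norm (x j - \<omega>))\<^sup>2) - (\<Sum>j\<in>I. \<Lambda> (idx_diff i j) * (norm (x0 j - \<omega>))\<^sup>2)) \<noteq> 0"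
      "indicator (voronoi_cell I x0 k) \<omega> * ((\<Sum>j\<in>I. \<Lambda> (idx_diff k j) * (norm (x j - \<omega>))\<^sup>2) - (\<Sum>j\<in>I. \<Lambda> (idx_diff k j) * (norm (x0 j - \<omega>))\<^sup>2)) \<noteq> 0"
    then show "i = k" by (intro cell_unique[of i I k \<omega> x0]) (auto simp: indicator_def split: if_splits)
  qed
  then show ?thesis using False by simp
qed




lemma emp_distortion_gfun:
  assumes "finite I"
  shows "emp_distortion I \<Lambda> w n x = (1 / (2 * real n)) * (\<Sum>m\<in>{1..n}. gfun I \<Lambda> x (w m))"
proof -
  have "(\<Sum>i\<in>I. \<Sum>m\<in>{m\<in>{1..n}. w m \<in> voronoi_cell I x i}. \<Sum>j\<in>I. \<Lambda> (idx_diff i j) * (norm (x j - w m))\<^sup>2)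
      = (\<Sum>i\<in>I. \<Sum>m\<in>{1..n}. if w m \<in> voronoi_cell I x i then (\<Sum>j\<in>I. \<Lambda> (idx_diff i j) * (norm (x j - w m))\<^sup>2) else 0)"
    by (rule sum.cong[OF refl], rule sum.inter_filter) simp
  also have "\<dots> = (\<Sum>m\<in>{1..n}. \<Sum>i\<in>I. if w m \<in> voronoi_cell I x i then (\<Sum>j\<in>I. \<Lambda> (idx_diff i j) * (norm (x j - w m))\<^sup>2) else 0)"
    by (rule sum.swap)
  also have "\<dots> = (\<Sum>m\<in>{1..n}. gfun I \<Lambda> x (w m))"
    unfolding gfun_def by (intro sum.cong refl) (simp add: indicator_def)
  finally show ?thesis unfolding emp_distortion_def by simp
qed

lemma distortion_gfun:
  fixes x :: "int list \<Rightarrow> real^'d" and P :: "(real^'d) measure"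
  assumes finI: "finite I" and Lam: "\<forall>i\<in>I. \<forall>j\<in>I. 0 \<le> \<Lambda> (idx_diff i j) \<and> \<Lambda> (idx_diff i j) \<le> 1"
    and x: "x \<in> D_delta I \<delta>" and P: "finite_measure P" and sP: "sets P = sets borel"
  shows "distortion I \<Lambda> P x = (1/2) * integral\<^sup>L P (gfun I \<Lambda> x)"
proof -
  interpret finite_measure P by (fact P)
  have mP[measurable]: "voronoi_cell I x i \<in> sets P" for i using finI sP by simp
  have int: "integrable P (\<lambda>\<omega>. indicator (voronoi_cell I x i) \<omega> * (norm (x j - \<omega>))\<^sup>2)" if j: "j \<in> I" for i j
  proof (rule integrable_const_bound[where B="(Rb TYPE('d))\<^sup>2"])
    show "AE \<omega> in P. norm (indicator (voronoi_cell I x i) \<omega> * (norm (x j - \<omega>))\<^sup>2) \<le> (Rb TYPE('d))\<^sup>2"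
    proof (rule AE_I2)
      fix \<omega>
      show "norm (indicator (voronoi_cell I x i) \<omega> * (norm (x j - \<omega>))\<^sup>2) \<le> (Rb TYPE('d))\<^sup>2"
      proof (cases "\<omega> \<in> voronoi_cell I x i")
        case True
        have "norm (x j - \<omega>) \<le> Rb TYPE('d)" using cube_dist[OF D_cube[OF x j] cell_cube[OF True]] .
        then show ?thesis using True by (simp add: power_mono)
      qed simp
    qed
    show "(\<lambda>\<omega>. indicator (voronoi_cell I x i) \<omega> * (norm (x j - \<omega>))\<^sup>2) \<in> borel_measurable P"
      using sP by (simp add: measurable_def[of P] measurable_def[of borel]) measurable
  qed
  have "integral\<^sup>L P (gfun I \<Lambda> x) = integral\<^sup>L P (\<lambda>\<omega>. \<Sum>i\<in>I. \<Sum>j\<in>I. \<Lambda> (idx_diff i j) *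
          (indicator (voronoi_cell I x i) \<omega> * (norm (x j - \<omega>))\<^sup>2))"
    unfolding gfun_def by (simp add: sum_distrib_left mult_ac)
  also have "\<dots> = (\<Sum>i\<in>I. \<Sum>j\<in>I. \<Lambda> (idx_diff i j) *
          integral\<^sup>L P (\<lambda>\<omega>. indicator (voronoi_cell I x i) \<omega> * (norm (x j - \<omega>))\<^sup>2))"
    using int by (simp add: integral_sum integrable_sum)
  finally show ?thesis
    unfolding distortion_def set_lebesgue_integral_def by simp
qed

lemma bisector_eq:
  fixes a b w :: "real^'d"
  shows "norm (a - w) = norm (b - w) \<longleftrightarrow> (2 *\<^sub>R (b - a)) \<bullet> w = b \<bullet> b - a \<bullet> a"
proof -
  have "norm (a - w) = norm (b - w) \<longleftrightarrow> (norm (a - w))\<^sup>2 = (norm (b - w))\<^sup>2"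
    by (metis norm_ge_zero power2_eq_iff_nonneg)
  also have "\<dots> \<longleftrightarrow> (a - w) \<bullet> (a - w) = (b - w) \<bullet> (b - w)" by (simp add: power2_norm_eq_inner)
  also have "\<dots> \<longleftrightarrow> (2 *\<^sub>R (b - a)) \<bullet> w = b \<bullet> b - a \<bullet> a"
    by (simp add: inner_diff_left inner_diff_right inner_commute algebra_simps)
  finally show ?thesis .
qed

lemma bisector_null:
  fixes a b :: "real^'d"
  assumes "a \<noteq> b"
  shows "{w. norm (a - w) = norm (b - w)} \<in> null_sets lborel"
proof -
  have eq: "{w. norm (a - w) = norm (b - w)} = {w. (2 *\<^sub>R (b - a)) \<bullet> w = b \<bullet> b - a \<bullet> a}"
    by (simp add: bisector_eq)
  have "negligible {w. (2 *\<^sub>R (b - a)) \<bullet> w = b \<bullet> b - a \<bullet> a}"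
    using assms by (intro negligible_hyperplane) auto
  moreover have "{w::real^'d. norm (a - w) = norm (b - w)} \<in> sets lborel" by measurable
  ultimately show ?thesis unfolding eq
    by (simp add: negligible_iff_null_sets null_sets_completion_iff)
qed

lemma Aset_small:
  fixes x0 :: "int list \<Rightarrow> real^'d" and f :: "real^'d \<Rightarrow> ennreal"
  assumes finI: "finite I" and x0: "x0 \<in> D_delta I \<delta>" and delta: "\<delta> > 0"
    and f: "f \<in> borel_measurable lborel" and P: "finite_measure (density lborel f)" and e: "e > 0"
  shows "\<exists>r>0. measure (density lborel f) (Aset I x0 r) < e"
proof -
  define P where "P = density lborel f"
  interpret finite_measure P using P unfolding P_def .
  have sP: "sets P = sets borel" by (simp add: P_def)
  define A where "A n = Aset I x0 (1 / Suc n)" for n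
  have Am: "A n \<in> sets P" for n unfolding A_def sP using finI by simp
  have dec: "decseq A"
    unfolding decseq_def A_def Aset_def
  proof (intro allI impI subsetI)
    fix m n :: nat and w assume mn: "m \<le> n"
    have "2 * (1 / real (Suc n)) \<le> 2 * (1 / real (Suc m))"
      using mn by (simp add: frac_le)
    then show "w \<in> {\<omega> \<in> unit_cube. \<exists>i\<in>I. \<exists>k\<in>I. i \<noteq> k \<and> \<bar>norm (x0 i - \<omega>) - norm (x0 k - \<omega>)\<bar> \<le> 2 * (1 / real (Suc n))}
      \<Longrightarrow> w \<in> {\<omega> \<in> unit_cube. \<exists>i\<in>I. \<exists>k\<in>I. i \<noteq> k \<and> \<bar>norm (x0 i - \<omega>) - norm (x0 k - \<omega>)\<bar> \<le> 2 * (1 / real (Suc m))}"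
      by force
  qed
  define N where "N = (\<Union>p\<in>{p\<in>I\<times>I. fst p \<noteq> snd p}. {w. norm (x0 (fst p) - w) = norm (x0 (snd p) - w)})"
  have Nnull: "N \<in> null_sets P"
    unfolding N_def
  proof (rule null_sets_UN')
    show "countable {p\<in>I\<times>I. fst p \<noteq> snd p}" using finI by (intro countable_finite) auto
    fix p assume p: "p \<in> {p\<in>I\<times>I. fst p \<noteq> snd p}"
    then have "x0 (fst p) \<noteq> x0 (snd p)"
      using x0 delta unfolding D_delta_def by force
    then have nl: "{w. norm (x0 (fst p) - w) = norm (x0 (snd p) - w)} \<in> null_sets lborel"
      by (rule bisector_null)
    then show "{w. norm (x0 (fst p) - w) = norm (x0 (snd p) - w)} \<in> null_sets P"
      unfolding P_def using f
      by (subst null_sets_density_iff) (auto simp: AE_iff_null_sets[symmetric] intro: AE_mp[OF AE_not_in[OF nl]])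
  qed
  have sub: "(\<Inter>n. A n) \<subseteq> N"
  proof
    fix w assume w: "w \<in> (\<Inter>n. A n)"
    then have "w \<in> A 0" by auto
    then obtain i k where ik: "i \<in> I" "k \<in> I" "i \<noteq> k" unfolding A_def Aset_def by auto
    have "\<exists>i\<in>I. \<exists>k\<in>I. i \<noteq> k \<and> norm (x0 i - w) = norm (x0 k - w)"
    proof (rule ccontr)
      assume nt: "\<not> ?thesis"
      define d where "d = Min ((\<lambda>p. \<bar>norm (x0 (fst p) - w) - norm (x0 (snd p) - w)\<bar>) ` {p\<in>I\<times>I. fst p \<noteq> snd p})"
      have fin: "finite {p\<in>I\<times>I. fst p \<noteq> snd p}" using finI by auto
      have ne: "{p\<in>I\<times>I. fst p \<noteq> snd p} \<noteq> {}" using ik by auto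
      have dpos: "d > 0" unfolding d_def using fin ne nt
        by (subst Min_gr_iff) auto
      obtain n :: nat where n: "2 / Suc n < d"
      proof -
        obtain n :: nat where "1 / Suc n < d / 2" using dpos nat_approx_posE[of "d/2"] by auto
        then show ?thesis using that[of n] by (simp add: field_simps)
      qed
      have "w \<in> A n" using w by auto
      then obtain i' k' where "i' \<in> I" "k' \<in> I" "i' \<noteq> k'"
        "\<bar>norm (x0 i' - w) - norm (x0 k' - w)\<bar> \<le> 2 * (1 / real (Suc n))"
        unfolding A_def Aset_def by auto
      moreover have "d \<le> \<bar>norm (x0 i' - w) - norm (x0 k' - w)\<bar>"
        unfolding d_def using fin \<open>i' \<in> I\<close> \<open>k' \<in> I\<close> \<open>i' \<noteq> k'\<close>
        by (intro Min_le) (auto simp: image_iff intro!: bexI[of _ "(i', k')"])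
      ultimately show False using n by simp
    qed
    then show "w \<in> N" unfolding N_def by auto
  qed
  have "(\<lambda>n. measure P (A n)) \<longlonglongrightarrow> measure P (\<Inter>n. A n)"
    using Am dec by (intro finite_Lim_measure_decseq) auto
  moreover have "measure P (\<Inter>n. A n) = 0"
  proof -
    have "(\<Inter>n. A n) \<in> sets P" using Am by auto
    moreover have "emeasure P (\<Inter>n. A n) \<le> emeasure P N"
      by (rule emeasure_mono[OF sub]) (use Nnull in auto)
    ultimately have "(\<Inter>n. A n) \<in> null_sets P" using Nnull by (intro null_setsI) auto
    then show ?thesis by (auto simp: measure_def)
  qed
  ultimately have "eventually (\<lambda>n. measure P (A n) < e) sequentially"
    using e by (auto dest: order_tendstoD(2))
  then obtain n where "measure P (A n) < e" by (auto simp: eventually_sequentially)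
  then show ?thesis unfolding P_def A_def by (intro exI[of _ "1 / Suc n"]) auto
qed




definition Nbhd :: "int list set \<Rightarrow> (int list \<Rightarrow> 'b::metric_space) \<Rightarrow> real \<Rightarrow> (int list \<Rightarrow> 'b) set" where
  "Nbhd I x0 r = {x. \<forall>i\<in>I. dist (x i) (x0 i) < r}"

lemma open_Nbhd: "finite I \<Longrightarrow> open (Nbhd I x0 r)"
proof -
  assume fin: "finite I"
  have "Nbhd I x0 r = (\<Inter>i\<in>I. (\<lambda>x. x i) -` ball (x0 i) r)"
    unfolding Nbhd_def by (auto simp: dist_commute)
  also have "open \<dots>"
    using fin by (intro open_INT ballI open_vimage continuous_on_product_coordinates) auto
  finally show ?thesis .
qed

lemma Nbhd_self: "r > 0 \<Longrightarrow> x0 \<in> Nbhd I x0 r"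
  unfolding Nbhd_def by auto

lemma compact_D: "compact (D_delta I \<delta> :: (int list \<Rightarrow> real^'d) set)"
proof -
  define S where "S i = (if i \<in> I then unit_cube else {0::real^'d})" for i
  have "compactin (product_topology (\<lambda>_. euclidean) UNIV) (PiE UNIV S)"
    unfolding compactin_PiE by (auto simp: S_def unit_cube_def)
  then have K: "compact (PiE UNIV S)" by (simp add: euclidean_product_topology)
  have C: "closed {x::int list \<Rightarrow> real^'d. \<forall>i\<in>I. \<forall>j\<in>I. i \<noteq> j \<longrightarrow> \<delta> \<le> dist (x i) (x j)}"
  proof -
    have "{x::int list \<Rightarrow> real^'d. \<forall>i\<in>I. \<forall>j\<in>I. i \<noteq> j \<longrightarrow> \<delta> \<le> dist (x i) (x j)}
        = (\<Inter>p\<in>{p\<in>I\<times>I. fst p \<noteq> snd p}. {x. \<delta> \<le> dist (x (fst p)) (x (snd p))})" by auto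
    also have "closed \<dots>"
      by (intro closed_INT ballI closed_Collect_le continuous_on_const continuous_on_dist
          continuous_on_product_coordinates)
    finally show ?thesis .
  qed
  have "D_delta I \<delta> = PiE UNIV S \<inter> {x. \<forall>i\<in>I. \<forall>j\<in>I. i \<noteq> j \<longrightarrow> \<delta> \<le> dist (x i) (x j)}"
    unfolding D_delta_def S_def by (auto simp: PiE_def Pi_def)
  then show ?thesis using K C by auto
qed




locale vq = prob_space M for M :: "'s measure" +
  fixes \<omega> :: "nat \<Rightarrow> 's \<Rightarrow> real^'d" and I :: "int list set" and \<Lambda> :: "int list \<Rightarrow> real"
    and \<delta> :: real and f :: "real^'d \<Rightarrow> real"
  assumes finI: "finite I" and Lam: "\<forall>i\<in>I. \<forall>j\<in>I. 0 \<le> \<Lambda> (idx_diff i j) \<and> \<Lambda> (idx_diff i j) \<le> 1"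
    and delta: "\<delta> > 0"
    and indep: "indep_vars (\<lambda>_. borel) \<omega> UNIV"
    and in_cube: "\<forall>m. \<forall>s\<in>space M. \<omega> m s \<in> unit_cube"
    and f_meas: "f \<in> borel_measurable lborel"
    and law: "\<forall>m. distr M borel (\<omega> m) = density lborel (\<lambda>y. ennreal (f y))"
begin

abbreviation "P \<equiv> density lborel (\<lambda>y. ennreal (f y))"
abbreviation D :: "(int list \<Rightarrow> real^'d) set" where "D \<equiv> D_delta I \<delta>"
definition "V x = distortion I \<Lambda> P x"
definition "Vn s n x = emp_distortion I \<Lambda> (\<lambda>m. \<omega> m s) n x"
definition "G = card I * (Rb TYPE('d))\<^sup>2"
definition "C1 = card I * (2 * Rb TYPE('d))"

lemma G_nonneg: "G \<ge> 0" unfolding G_def by simp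
lemma C1_nonneg: "C1 \<ge> 0" unfolding C1_def using Rb_nonneg[where 'd='d] by simp

sublocale iid: iid_setting M \<omega> P
  by unfold_locales (use indep law in auto)

lemma meas_\<omega>'[measurable]: "\<omega> m \<in> borel_measurable M"
  using indep unfolding indep_vars_def by auto

lemma P_prob: "prob_space P"
proof -
  have "prob_space (distr M borel (\<omega> 0))" by (rule prob_space_distr) simp
  then show ?thesis using law by simp
qed

interpretation Pp: prob_space P by (rule P_prob)

lemma sets_P[simp]: "sets P = sets borel" by simp

lemma f_ennreal_meas: "(\<lambda>y. ennreal (f y)) \<in> borel_measurable lborel"
  using f_meas by measurable

lemma gfun_integrable:
  assumes x: "x \<in> D" shows "integrable P (gfun I \<Lambda> x)"
proof (rule Pp.integrable_const_bound[where B=G])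
  show "AE w in P. norm (gfun I \<Lambda> x w) \<le> G"
    by (intro AE_I2) (simp add: G_def gfun_bound[OF finI Lam x])
  show "gfun I \<Lambda> x \<in> borel_measurable P"
    by (subst measurable_cong_sets[OF sets_P refl]) (rule gfun_borel[OF finI])
qed

lemma gfun_close':
  assumes x: "x \<in> D" and x0: "x0 \<in> D" and r: "r > 0" and close: "\<forall>i\<in>I. dist (x i) (x0 i) < r"
  shows "\<bar>gfun I \<Lambda> x w - gfun I \<Lambda> x0 w\<bar> \<le> C1 * r + 2 * G * indicator (Aset I x0 r) w"
proof -
  have "card I * (2 * Rb TYPE('d) * r) + 2 * (card I * (Rb TYPE('d))\<^sup>2) * indicator (Aset I x0 r) w
      = C1 * r + 2 * G * indicator (Aset I x0 r) w" by (simp add: C1_def G_def algebra_simps)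
  then show ?thesis using gfun_close[OF finI Lam x x0 r close, of w] by simp
qed

lemma V_eq: "x \<in> D \<Longrightarrow> V x = (1/2) * integral\<^sup>L P (gfun I \<Lambda> x)"
  unfolding V_def by (rule distortion_gfun[OF finI Lam _ _ sets_P]) (auto intro: Pp.finite_measure_axioms)

lemma Vn_eq: "Vn s n x = (1 / (2 * real n)) * (\<Sum>m\<in>{1..n}. gfun I \<Lambda> x (\<omega> m s))"
  unfolding Vn_def by (rule emp_distortion_gfun[OF finI])

lemma V_close:
  assumes x: "x \<in> D" and x0: "x0 \<in> D" and r: "r > 0" and xN: "x \<in> Nbhd I x0 r"
  shows "\<bar>V x - V x0\<bar> \<le> C1 * r / 2 + G * measure P (Aset I x0 r)"
proof -
  have close: "\<forall>i\<in>I. dist (x i) (x0 i) < r" using xN unfolding Nbhd_def by auto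
  have Am: "Aset I x0 r \<in> sets P" using finI by simp
  have intA: "integrable P (indicator (Aset I x0 r) :: _ \<Rightarrow> real)"
    using Am by (intro integrable_real_indicator) (auto simp: Pp.emeasure_eq_measure)
  have "\<bar>integral\<^sup>L P (gfun I \<Lambda> x) - integral\<^sup>L P (gfun I \<Lambda> x0)\<bar>
      = \<bar>integral\<^sup>L P (\<lambda>w. gfun I \<Lambda> x w - gfun I \<Lambda> x0 w)\<bar>"
    using gfun_integrable[OF x] gfun_integrable[OF x0] by simp
  also have "\<dots> \<le> integral\<^sup>L P (\<lambda>w. C1 * r + 2 * G * indicator (Aset I x0 r) w)"
    by (rule integral_abs_bound_integral)
      (use gfun_integrable[OF x] gfun_integrable[OF x0] intA
        gfun_close'[OF x x0 r close] in auto)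
  also have "\<dots> = C1 * r + 2 * G * measure P (Aset I x0 r)"
  proof -
    have "measure P UNIV = 1" using Pp.prob_space by simp
    then show ?thesis using intA Am by simp
  qed
  finally show ?thesis using V_eq[OF x] V_eq[OF x0] by (simp add: abs_mult_pos)
qed

lemma Vn_close:
  assumes x: "x \<in> D" and x0: "x0 \<in> D" and r: "r > 0" and xN: "x \<in> Nbhd I x0 r" and n: "n > 0"
  shows "\<bar>Vn s n x - Vn s n x0\<bar> \<le> C1 * r / 2 + G * ((\<Sum>m\<in>{1..n}. indicator (Aset I x0 r) (\<omega> m s)) / n)"
proof -
  have close: "\<forall>i\<in>I. dist (x i) (x0 i) < r" using xN unfolding Nbhd_def by auto
  have "\<bar>(\<Sum>m\<in>{1..n}. gfun I \<Lambda> x (\<omega> m s)) - (\<Sum>m\<in>{1..n}. gfun I \<Lambda> x0 (\<omega> m s))\<bar>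
      = \<bar>\<Sum>m\<in>{1..n}. gfun I \<Lambda> x (\<omega> m s) - gfun I \<Lambda> x0 (\<omega> m s)\<bar>"
    by (simp add: sum_subtractf)
  also have "\<dots> \<le> (\<Sum>m\<in>{1..n}. \<bar>gfun I \<Lambda> x (\<omega> m s) - gfun I \<Lambda> x0 (\<omega> m s)\<bar>)" by (rule sum_abs)
  also have "\<dots> \<le> (\<Sum>m\<in>{1..n}. C1 * r + 2 * G * indicator (Aset I x0 r) (\<omega> m s))"
    by (rule sum_mono) (rule gfun_close'[OF x x0 r close])
  also have "\<dots> = n * (C1 * r) + 2 * G * (\<Sum>m\<in>{1..n}. indicator (Aset I x0 r) (\<omega> m s))"
    by (simp add: sum.distrib sum_distrib_left)
  finally have H: "\<bar>(\<Sum>m\<in>{1..n}. gfun I \<Lambda> x (\<omega> m s)) - (\<Sum>m\<in>{1..n}. gfun I \<Lambda> x0 (\<omega> m s))\<bar>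
     \<le> n * (C1 * r) + 2 * G * (\<Sum>m\<in>{1..n}. indicator (Aset I x0 r) (\<omega> m s))" .
  have "\<bar>Vn s n x - Vn s n x0\<bar> = \<bar>(\<Sum>m\<in>{1..n}. gfun I \<Lambda> x (\<omega> m s)) - (\<Sum>m\<in>{1..n}. gfun I \<Lambda> x0 (\<omega> m s))\<bar> / (2 * n)"
    unfolding Vn_eq using n by (simp add: diff_divide_distrib[symmetric])
  also have "\<dots> \<le> (n * (C1 * r) + 2 * G * (\<Sum>m\<in>{1..n}. indicator (Aset I x0 r) (\<omega> m s))) / (2 * n)"
    using H n by (intro divide_right_mono) auto
  also have "\<dots> = C1 * r / 2 + G * ((\<Sum>m\<in>{1..n}. indicator (Aset I x0 r) (\<omega> m s)) / n)"
    using n by (simp add: field_simps)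
  finally show ?thesis .
qed

lemma rad_exists:
  assumes x0: "x0 \<in> D" and e: "e > 0"
  shows "\<exists>r>0. C1 * r + 2 * G * measure P (Aset I x0 r) < e"
proof -
  obtain r2 where r2: "r2 > 0" "measure P (Aset I x0 r2) < e / (2 * (2 * G + 1))"
    using Aset_small[OF finI x0 delta f_ennreal_meas Pp.finite_measure_axioms, of "e / (2 * (2 * G + 1))"]
      e G_nonneg by auto
  define r where "r = min r2 (e / (2 * (C1 + 1)))"
  have r: "r > 0" using r2 e C1_nonneg by (simp add: r_def)
  have "Aset I x0 r \<subseteq> Aset I x0 r2" unfolding Aset_def r_def by force
  then have m: "measure P (Aset I x0 r) \<le> measure P (Aset I x0 r2)"
    using finI by (intro Pp.finite_measure_mono) auto
  have "C1 * r \<le> C1 * (e / (2 * (C1 + 1)))" using C1_nonneg by (intro mult_left_mono) (auto simp: r_def)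
  also have "\<dots> < e / 2" using C1_nonneg e by (simp add: field_simps)
  finally have a: "C1 * r < e / 2" .
  have "2 * G * measure P (Aset I x0 r) \<le> 2 * G * (e / (2 * (2 * G + 1)))"
    using m r2 G_nonneg by (intro mult_left_mono) auto
  also have "\<dots> \<le> e / 2" using G_nonneg e by (simp add: field_simps)
  finally show ?thesis using a r by (intro exI[of _ r]) auto
qed

end



context vq begin

lemma gfun_nonneg: "gfun I \<Lambda> x w \<ge> 0"
  unfolding gfun_def using Lam by (intro sum_nonneg mult_nonneg_nonneg) auto

lemma Vn_nonneg: "Vn s n x \<ge> 0"
  unfolding Vn_eq by (intro mult_nonneg_nonneg sum_nonneg gfun_nonneg) auto

lemma V_cont: "continuous_on D V"
  unfolding continuous_on_def
proof (intro ballI tendstoI)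
  fix x0 and e :: real assume x0: "x0 \<in> D" and e: "e > 0"
  obtain r where r: "r > 0" "C1 * r + 2 * G * measure P (Aset I x0 r) < e"
    using rad_exists[OF x0 e] by auto
  show "eventually (\<lambda>x. dist (V x) (V x0) < e) (at x0 within D)"
    unfolding eventually_at_topological
  proof (intro exI conjI ballI impI)
    show "open (Nbhd I x0 r)" using finI by (rule open_Nbhd)
    show "x0 \<in> Nbhd I x0 r" using r(1) by (rule Nbhd_self)
    fix x assume "x \<in> Nbhd I x0 r" "x \<in> D"
    then have "\<bar>V x - V x0\<bar> \<le> C1 * r / 2 + G * measure P (Aset I x0 r)"
      using V_close x0 r by blast
    moreover have "0 \<le> C1 * r / 2 + G * measure P (Aset I x0 r)"
      using C1_nonneg G_nonneg r by simp
    ultimately show "dist (V x) (V x0) < e" using r by (simp add: dist_real_def)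
  qed
qed

lemma slln_g:
  assumes x0: "x0 \<in> D"
  shows "AE s in M. (\<lambda>n. Vn s n x0) \<longlonglongrightarrow> V x0"
proof -
  have "AE s in M. (\<lambda>n. (\<Sum>m\<in>{1..n}. gfun I \<Lambda> x0 (\<omega> m s)) / n) \<longlonglongrightarrow> integral\<^sup>L P (gfun I \<Lambda> x0)"
    by (rule iid.slln[OF gfun_borel[OF finI], where c=G]) (simp add: G_def gfun_bound[OF finI Lam x0])
  then show ?thesis
  proof (rule eventually_mono)
    fix s assume "(\<lambda>n. (\<Sum>m\<in>{1..n}. gfun I \<Lambda> x0 (\<omega> m s)) / n) \<longlonglongrightarrow> integral\<^sup>L P (gfun I \<Lambda> x0)"
    then have "(\<lambda>n. (1/2) * ((\<Sum>m\<in>{1..n}. gfun I \<Lambda> x0 (\<omega> m s)) / n)) \<longlonglongrightarrow> (1/2) * integral\<^sup>L P (gfun I \<Lambda> x0)"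
      by (rule tendsto_mult_left)
    then show "(\<lambda>n. Vn s n x0) \<longlonglongrightarrow> V x0"
      unfolding Vn_eq V_eq[OF x0] by simp
  qed
qed

lemma slln_A:
  "AE s in M. (\<lambda>n. (\<Sum>m\<in>{1..n}. indicator (Aset I x0 r) (\<omega> m s)) / n) \<longlonglongrightarrow> measure P (Aset I x0 r)"
proof -
  have "AE s in M. (\<lambda>n. (\<Sum>m\<in>{1..n}. indicator (Aset I x0 r) (\<omega> m s)) / n) \<longlonglongrightarrow> integral\<^sup>L P (indicator (Aset I x0 r))"
    by (rule iid.slln[where c=1]) (use finI in auto)
  moreover have "integral\<^sup>L P (indicator (Aset I x0 r)) = measure P (Aset I x0 r)"
    using finI by simp
  ultimately show ?thesis by simp
qed

lemma uniform:
  "AE s in M. \<forall>k::nat. eventually (\<lambda>n. \<forall>x\<in>D. \<bar>Vn s n x - V x\<bar> < (2 + G) / Suc k) sequentially"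
proof -
  define rad where "rad k x0 = (SOME r. r > 0 \<and> C1 * r + 2 * G * measure P (Aset I x0 r) < 1 / Suc k)" for k :: nat and x0
  have rad: "rad k x0 > 0 \<and> C1 * rad k x0 + 2 * G * measure P (Aset I x0 (rad k x0)) < 1 / Suc k"
    if "x0 \<in> D" for k x0
    unfolding rad_def by (rule someI_ex) (rule rad_exists[OF that], simp)
  have "\<exists>F. F \<subseteq> D \<and> finite F \<and> D \<subseteq> (\<Union>x0\<in>F. Nbhd I x0 (rad k x0))" for k
  proof -
    have cov: "D \<subseteq> (\<Union>x0\<in>D. Nbhd I x0 (rad k x0))"
      using rad Nbhd_self by blast
    show ?thesis
      by (rule compactE_image[OF compact_D _ cov]) (use open_Nbhd[OF finI] in blast)+
  qed
  then obtain F where F: "\<And>k. F k \<subseteq> D" "\<And>k. finite (F k)" "\<And>k. D \<subseteq> (\<Union>x0\<in>F k. Nbhd I x0 (rad k x0))"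
    by metis
  have "AE s in M. \<forall>k::nat. \<forall>x0\<in>F k. (\<lambda>n. Vn s n x0) \<longlonglongrightarrow> V x0 \<and>
     (\<lambda>n. (\<Sum>m\<in>{1..n}. indicator (Aset I x0 (rad k x0)) (\<omega> m s)) / n) \<longlonglongrightarrow> measure P (Aset I x0 (rad k x0))"
    unfolding AE_all_countable
  proof
    fix k
    show "AE s in M. \<forall>x0\<in>F k. (\<lambda>n. Vn s n x0) \<longlonglongrightarrow> V x0 \<and>
     (\<lambda>n. (\<Sum>m\<in>{1..n}. indicator (Aset I x0 (rad k x0)) (\<omega> m s)) / n) \<longlonglongrightarrow> measure P (Aset I x0 (rad k x0))"
      using F(1)[of k] by (intro AE_finite_allI[OF F(2)] AE_conjI slln_g slln_A) auto
  qed
  then show ?thesis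
  proof (rule eventually_mono, intro allI)
    fix s k
    assume H: "\<forall>k::nat. \<forall>x0\<in>F k. (\<lambda>n. Vn s n x0) \<longlonglongrightarrow> V x0 \<and>
     (\<lambda>n. (\<Sum>m\<in>{1..n}. indicator (Aset I x0 (rad k x0)) (\<omega> m s)) / n) \<longlonglongrightarrow> measure P (Aset I x0 (rad k x0))"
    define \<epsilon> where "\<epsilon> = 1 / real (Suc k)"
    have eps: "\<epsilon> > 0" by (simp add: \<epsilon>_def)
    have ev: "eventually (\<lambda>n. n > 0 \<and> (\<forall>x0\<in>F k. \<bar>Vn s n x0 - V x0\<bar> < \<epsilon> \<and>
        (\<Sum>m\<in>{1..n}. indicator (Aset I x0 (rad k x0)) (\<omega> m s)) / n < measure P (Aset I x0 (rad k x0)) + \<epsilon>)) sequentially"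
    proof (intro eventually_conj eventually_ball_finite[OF F(2)] ballI)
      show "eventually (\<lambda>n. n > (0::nat)) sequentially" by (rule eventually_gt_at_top)
      fix x0 assume x0: "x0 \<in> F k"
      have "eventually (\<lambda>n. dist (Vn s n x0) (V x0) < \<epsilon>) sequentially"
        using H x0 eps by (auto intro: tendstoD)
      then show "eventually (\<lambda>n. \<bar>Vn s n x0 - V x0\<bar> < \<epsilon>) sequentially" by (simp add: dist_real_def)
      have "eventually (\<lambda>n. dist ((\<Sum>m\<in>{1..n}. indicator (Aset I x0 (rad k x0)) (\<omega> m s)) / n) (measure P (Aset I x0 (rad k x0))) < \<epsilon>) sequentially"
        using H x0 eps by (auto intro: tendstoD)
      then show "eventually (\<lambda>n. (\<Sum>m\<in>{1..n}. indicator (Aset I x0 (rad k x0)) (\<omega> m s)) / n < measure P (Aset I x0 (rad k x0)) + \<epsilon>) sequentially"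
        by (rule eventually_mono) (auto simp: dist_real_def)
    qed
    show "eventually (\<lambda>n. \<forall>x\<in>D. \<bar>Vn s n x - V x\<bar> < (2 + G) / Suc k) sequentially"
      using ev
    proof (rule eventually_mono, intro ballI)
      fix n x
      assume n: "n > 0 \<and> (\<forall>x0\<in>F k. \<bar>Vn s n x0 - V x0\<bar> < \<epsilon> \<and>
        (\<Sum>m\<in>{1..n}. indicator (Aset I x0 (rad k x0)) (\<omega> m s)) / n < measure P (Aset I x0 (rad k x0)) + \<epsilon>)"
        and x: "x \<in> D"
      obtain x0 where x0: "x0 \<in> F k" "x \<in> Nbhd I x0 (rad k x0)" using F(3)[of k] x by blast
      have x0D: "x0 \<in> D" using F(1) x0 by blast
      define r where "r = rad k x0"
      define fr where "fr = (\<Sum>m\<in>{1..n}. indicator (Aset I x0 r) (\<omega> m s)) / n"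
      define pm where "pm = measure P (Aset I x0 r)"
      have r: "r > 0" "C1 * r + 2 * G * pm < \<epsilon>" using rad[OF x0D, of k] by (auto simp: r_def pm_def \<epsilon>_def)
      have a: "\<bar>Vn s n x - Vn s n x0\<bar> \<le> C1 * r / 2 + G * fr"
        unfolding fr_def using Vn_close[OF x x0D r(1)] x0 n by (simp add: r_def)
      have b: "\<bar>V x - V x0\<bar> \<le> C1 * r / 2 + G * pm"
        unfolding pm_def using V_close[OF x x0D r(1)] x0 by (simp add: r_def)
      have c: "\<bar>Vn s n x0 - V x0\<bar> < \<epsilon>" "fr < pm + \<epsilon>"
        using n x0 by (auto simp: fr_def pm_def r_def)
      have d: "G * fr \<le> G * (pm + \<epsilon>)" using c(2) G_nonneg by (intro mult_left_mono) auto
      have "\<bar>Vn s n x - V x\<bar> < \<epsilon> + \<epsilon> + G * \<epsilon>"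
      proof -
        have e: "G * (pm + \<epsilon>) = G * pm + G * \<epsilon>" by (simp add: distrib_left)
        have t: "\<bar>Vn s n x - V x\<bar> \<le> \<bar>Vn s n x - Vn s n x0\<bar> + \<bar>Vn s n x0 - V x0\<bar> + \<bar>V x - V x0\<bar>"
          by arith
        show ?thesis using t a b c(1) d e r(2) by linarith
      qed
      also have "\<dots> = (2 + G) * \<epsilon>" by (simp add: algebra_simps)
      also have "\<dots> = (2 + G) / Suc k" by (simp add: \<epsilon>_def)
      finally show "\<bar>Vn s n x - V x\<bar> < (2 + G) / Suc k" .
    qed
  qed
qed

end



context vq begin

lemma final:
  fixes \<beta> :: "nat \<Rightarrow> real" and U :: "(int list \<Rightarrow> real^'d) set"
  assumes beta_pos: "\<forall>n\<ge>1. \<beta> n > 0" and beta_lim: "filterlim \<beta> at_top sequentially"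
    and U: "open U" and sub: "argmin_set I \<delta> \<Lambda> P \<subseteq> U"
  shows "AE s in M. eventually (\<lambda>n. almost_min_set I \<delta> \<Lambda> (\<lambda>m. \<omega> m s) \<beta> n \<subseteq> U) sequentially"
proof (cases "D \<subseteq> U")
  case True
  have "almost_min_set I \<delta> \<Lambda> w \<beta> n \<subseteq> U" for w n
    using True unfolding almost_min_set_def by auto
  then show ?thesis by simp
next
  case False
  obtain xs where xs: "xs \<in> D" "\<forall>z\<in>D. V xs \<le> V z"
    using continuous_attains_inf[OF compact_D _ V_cont] False by auto
  then have xsU: "xs \<in> U" using sub unfolding argmin_set_def V_def by auto
  have cDU: "compact (D - U)"
  proof -
    have "compact (D \<inter> - U)" using U by (intro compact_Int_closed compact_D) (simp add: closed_def)
    then show ?thesis by (simp add: Diff_eq)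
  qed
  obtain y where y: "y \<in> D - U" "\<forall>z\<in>D - U. V y \<le> V z"
    using continuous_attains_inf[OF cDU _ continuous_on_subset[OF V_cont]] False by auto
  have "y \<notin> argmin_set I \<delta> \<Lambda> P" using y sub by auto
  then obtain z where z: "z \<in> D" "V y > V z" using y unfolding argmin_set_def V_def by auto
  define \<eta> where "\<eta> = V y - V xs"
  have eta: "\<eta> > 0" using z xs unfolding \<eta>_def by force
  show ?thesis
    using uniform
  proof (rule eventually_mono)
    fix s assume H: "\<forall>k::nat. eventually (\<lambda>n. \<forall>x\<in>D. \<bar>Vn s n x - V x\<bar> < (2 + G) / Suc k) sequentially"
    obtain k :: nat where k: "1 / Suc k < \<eta> / (3 * (2 + G))"
      using G_nonneg eta nat_approx_posE[of "\<eta> / (3 * (2 + G))"] by auto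
    have kk: "(2 + G) / Suc k < \<eta> / 3"
    proof -
      have "(2 + G) / Suc k = (2 + G) * (1 / Suc k)" by simp
      also have "\<dots> < (2 + G) * (\<eta> / (3 * (2 + G)))"
        using k G_nonneg by (intro mult_strict_left_mono) auto
      also have "\<dots> = \<eta> / 3" using G_nonneg by (simp add: field_simps)
      finally show ?thesis .
    qed
    have evb: "eventually (\<lambda>n. \<beta> n > 3 / \<eta>) sequentially"
      using beta_lim by (simp add: filterlim_at_top_dense)
    show "eventually (\<lambda>n. almost_min_set I \<delta> \<Lambda> (\<lambda>m. \<omega> m s) \<beta> n \<subseteq> U) sequentially"
      using H[rule_format, of k] evb eventually_ge_at_top[of 1]
    proof (eventually_elim, intro subsetI)
      fix n x
      assume unif: "\<forall>x\<in>D. \<bar>Vn s n x - V x\<bar> < (2 + G) / Suc k" and bn: "\<beta> n > 3 / \<eta>" and n: "n \<ge> 1"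
        and x: "x \<in> almost_min_set I \<delta> \<Lambda> (\<lambda>m. \<omega> m s) \<beta> n"
      have xD: "x \<in> D" and xlt: "Vn s n x < (INF z\<in>D. Vn s n z) + 1 / \<beta> n"
        using x unfolding almost_min_set_def Vn_def by auto
      have "(INF z\<in>D. Vn s n z) \<le> Vn s n xs"
        by (rule cINF_lower[OF _ xs(1)]) (auto intro: bdd_belowI2[where m=0] Vn_nonneg)
      moreover have "1 / \<beta> n < \<eta> / 3"
      proof -
        have "3 / \<eta> > 0" using eta by simp
        then have bp: "\<beta> n > 0" using bn by linarith
        have "3 < \<beta> n * \<eta>" using bn eta by (simp add: field_simps)
        then show ?thesis using bp eta by (simp add: field_simps)
      qed
      ultimately have A: "Vn s n x < Vn s n xs + \<eta> / 3" using xlt by linarith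
      have B: "Vn s n xs < V xs + \<eta> / 3" using unif[rule_format, OF xs(1)] kk by linarith
      show "x \<in> U"
      proof (rule ccontr)
        assume "x \<notin> U"
        then have "V x \<ge> V y" using y xD by auto
        moreover have "Vn s n x > V x - \<eta> / 3" using unif[rule_format, OF xD] kk by linarith
        moreover have "V y = V xs + \<eta>" unfolding \<eta>_def by simp
        ultimately show False using A B by linarith
      qed
    qed
  qed
qed

end

theorem mainTheorem2:
  fixes M :: "'s measure" and \<omega> :: "nat \<Rightarrow> 's \<Rightarrow> real ^ 'd"
    and e :: nat and I :: "int list set" and \<Lambda> :: "int list \<Rightarrow> real"
    and \<delta> B :: real and f :: "real ^ 'd \<Rightarrow> real" and \<beta> :: "nat \<Rightarrow> real"
  assumes e: "1 \<le> e" "e \<le> CARD('d)"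
    and I: "finite I" "\<forall>i\<in>I. length i = e"
    and Lam_range: "\<forall>k\<in>diff_set I. 0 \<le> \<Lambda> k \<and> \<Lambda> k \<le> 1"
    and Lam_sym: "\<forall>k\<in>diff_set I. \<Lambda> k = \<Lambda> (idx_neg k)"
    and Lam_0: "\<Lambda> (replicate e 0) = 1"
    and delta: "\<delta> > 0" and D_ne: "D_delta I \<delta> \<noteq> {}"
    and M: "prob_space M"
    and indep: "prob_space.indep_vars M (\<lambda>_. borel) \<omega> UNIV"
    and in_cube: "\<forall>m. \<forall>s\<in>space M. \<omega> m s \<in> unit_cube"
    and f_meas: "f \<in> borel_measurable lborel"
    and f_bnd: "B > 0" "\<forall>y. 0 \<le> f y \<and> f y \<le> B"
    and law: "\<forall>m. distr M borel (\<omega> m) = density lborel (\<lambda>y. ennreal (f y))"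
    and beta_pos: "\<forall>n\<ge>1. \<beta> n > 0"
    and beta_lim: "filterlim \<beta> at_top sequentially"
  shows "\<forall>U. open U \<and> argmin_set I \<delta> \<Lambda> (density lborel (\<lambda>y. ennreal (f y))) \<subseteq> U \<longrightarrow>
           (AE s in M. eventually (\<lambda>n. almost_min_set I \<delta> \<Lambda> (\<lambda>m. \<omega> m s) \<beta> n \<subseteq> U) sequentially)"

proof (intro allI impI)
  fix U :: "(int list \<Rightarrow> real ^ 'd) set"
  assume U: "open U \<and> argmin_set I \<delta> \<Lambda> (density lborel (\<lambda>y. ennreal (f y))) \<subseteq> U"
  have Lam: "\<forall>i\<in>I. \<forall>j\<in>I. 0 \<le> \<Lambda> (idx_diff i j) \<and> \<Lambda> (idx_diff i j) \<le> 1"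
  proof (intro ballI)
    fix i j assume "i \<in> I" "j \<in> I"
    then have "idx_diff i j \<in> diff_set I" unfolding diff_set_def by blast
    then show "0 \<le> \<Lambda> (idx_diff i j) \<and> \<Lambda> (idx_diff i j) \<le> 1" using Lam_range by blast
  qed
  have V: "vq M \<omega> I \<Lambda> \<delta> f"
    unfolding vq_def vq_axioms_def using M I(1) Lam delta indep in_cube f_meas law by auto
  interpret vq M \<omega> I \<Lambda> \<delta> f by (rule V)
  show "AE s in M. eventually (\<lambda>n. almost_min_set I \<delta> \<Lambda> (\<lambda>m. \<omega> m s) \<beta> n \<subseteq> U) sequentially"
    using final[OF beta_pos beta_lim] U by blast
qed

end
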